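(* Let $\gamma\to_d\gamma'$ be a non-smooth d-step and let $k^*=\min\{\mathrm{rank}_\gamma(p,q) : (p,q)\in\mathrm{Edges},\ (p,q)\text{ non-smooth in }\gamma,\ \gamma'.p.d\ne\gamma.p.d \text{ or } \gamma'.q.d\neq\gamma.q.d\}$ (the set is nonempty). Then: (i) for every $e\in\mathrm{Edges}$, if $\mathrm{rank}_{\gamma'}(e)\le k^*$ and $e$ is non-smooth in $\gamma'$, then $\mathrm{rank}_\gamma(e)=\mathrm{rank}_{\gamma'}(e)$ and $e$ is non-smooth in $\gamma$; (ii) for every $e\in\mathrm{Edges}$, if $\mathrm{rank}_{\gamma}(e)<k^*$ and $e$ is non-smooth in $\gamma$, then $\mathrm{rank}_{\gamma'}(e)=\mathrm{rank}_{\gamma}(e)$ and $e$ is non-smooth in $\gamma'$; (iii) there exists $e\in\mathrm{Edges}$ with $\mathrm{rank}_\gamma(e)=k^*$, $e$ non-smooth in $\gamma$, and such that if $e$ is non-smooth in $\gamma'$ then $\mathrm{rank}_{\gamma'}(e)>\mathrm{rank}_\gamma(e)$.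
   Context: Let $G$ be a finite, connected, undirected graph with node set $V$ and a distinguished node $r$ (the root); $\mathrm{Edges}=\{(p,q)\in V\times V : p,q\text{ adjacent}\}$ (both orientations). Each node $p$ has a fixed ordered list $N(p)$ of its neighbours. A configuration $\gamma$ assigns to each node $p$ a value $\gamma.p.d\in\mathbb N$ and a neighbour $\gamma.p.par\in N(p)$. For a non-root $p$ let $Dist_p(\gamma)=\min\{\gamma.q.d+1 : q\in N(p)\}$. Algorithm BFS: Root enabled iff $\gamma.r.d\neq 0$, executing sets $r.d:=0$. Non-root $p$, action CD: enabled iff $\gamma.p.d\ne Dist_p(\gamma)$, executing sets $p.d:=Dist_p(\gamma)$. Non-root $p$, action CP: enabled iff $\gamma.p.d=Dist_p(\gamma)$ and $\gamma.q_0.d+1\neq\gamma.p.d$ with $q_0=\gamma.p.par$; executing sets $p.par$ to the first $q\in N(p)$ with $\gamma.q.d+1=\gamma.p.d$. A step $\gamma\to\gamma'$ holds iff a nonempty set $S$ of enabled nodes simultaneously execute their enabled action (evaluated in $\gamma$), others unchanged. A d-step $\gamma\to_d\gamma'$ is a step with $\gamma.r.d=\gamma'.r.d$ and $\gamma.p.d\neq\gamma'.p.d$ for some $p$. An edge $(p,q)$ is smooth in $\gamma$ if $|\gamma.p.d-\gamma.q.d|\le 1$, non-smooth otherwise. A d-step $\gamma\to_d\gamma'$ is smooth if every node $p$ with $\gamma'.p.d\neq\gamma.p.d$ has all its edges $(p,q)$, $q\in N(p)$, smooth in $\gamma$; otherwise it is non-smooth. $\mathrm{rank}_\gamma(p,q)=\min(\gamma.p.d,\gamma.q.d)$.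 *)

theory Defs
  imports Main
begin

record 'v cfg =
  dval :: "'v \<Rightarrow> nat"
  par  :: "'v \<Rightarrow> 'v"

definition Edges :: "'v set \<Rightarrow> ('v \<Rightarrow> 'v list) \<Rightarrow> ('v \<times> 'v) set" where
  "Edges V N = {(p, q). p \<in> V \<and> q \<in> set (N p)}"

definition bfs_graph :: "'v set \<Rightarrow> 'v \<Rightarrow> ('v \<Rightarrow> 'v list) \<Rightarrow> bool" where
  "bfs_graph V r N \<longleftrightarrow>
     finite V \<and> r \<in> V \<and>
     (\<forall>p\<in>V. set (N p) \<subseteq> V \<and> distinct (N p) \<and> p \<notin> set (N p)) \<and>
     (\<forall>p\<in>V. \<forall>q\<in>V. q \<in> set (N p) \<longleftrightarrow> p \<in> set (N q)) \<and>
     (\<forall>p\<in>V. (r, p) \<in> (Edges V N)\<^sup>*)"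

definition valid_cfg :: "'v set \<Rightarrow> ('v \<Rightarrow> 'v list) \<Rightarrow> 'v cfg \<Rightarrow> bool" where
  "valid_cfg V N \<gamma> \<longleftrightarrow> (\<forall>p\<in>V. par \<gamma> p \<in> set (N p))"

definition Dist :: "('v \<Rightarrow> 'v list) \<Rightarrow> 'v cfg \<Rightarrow> 'v \<Rightarrow> nat" where
  "Dist N \<gamma> p = Min {dval \<gamma> q + 1 | q. q \<in> set (N p)}"

definition root_enabled :: "'v \<Rightarrow> 'v cfg \<Rightarrow> bool" where
  "root_enabled r \<gamma> \<longleftrightarrow> dval \<gamma> r \<noteq> 0"

definition CD_enabled :: "'v \<Rightarrow> ('v \<Rightarrow> 'v list) \<Rightarrow> 'v cfg \<Rightarrow> 'v \<Rightarrow> bool" where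
  "CD_enabled r N \<gamma> p \<longleftrightarrow> p \<noteq> r \<and> dval \<gamma> p \<noteq> Dist N \<gamma> p"

definition CP_enabled :: "'v \<Rightarrow> ('v \<Rightarrow> 'v list) \<Rightarrow> 'v cfg \<Rightarrow> 'v \<Rightarrow> bool" where
  "CP_enabled r N \<gamma> p \<longleftrightarrow> p \<noteq> r \<and> dval \<gamma> p = Dist N \<gamma> p
      \<and> dval \<gamma> (par \<gamma> p) + 1 \<noteq> dval \<gamma> p"

definition enabled :: "'v set \<Rightarrow> 'v \<Rightarrow> ('v \<Rightarrow> 'v list) \<Rightarrow> 'v cfg \<Rightarrow> 'v \<Rightarrow> bool" where
  "enabled V r N \<gamma> p \<longleftrightarrow> p \<in> V \<and>
     (if p = r then root_enabled r \<gamma> else CD_enabled r N \<gamma> p \<or> CP_enabled r N \<gamma> p)"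

definition new_dval :: "'v \<Rightarrow> ('v \<Rightarrow> 'v list) \<Rightarrow> 'v cfg \<Rightarrow> 'v \<Rightarrow> nat" where
  "new_dval r N \<gamma> p =
     (if p = r then 0
      else if CD_enabled r N \<gamma> p then Dist N \<gamma> p
      else dval \<gamma> p)"

definition new_par :: "'v \<Rightarrow> ('v \<Rightarrow> 'v list) \<Rightarrow> 'v cfg \<Rightarrow> 'v \<Rightarrow> 'v" where
  "new_par r N \<gamma> p =
     (if p \<noteq> r \<and> CP_enabled r N \<gamma> p
      then hd (filter (\<lambda>q. dval \<gamma> q + 1 = dval \<gamma> p) (N p))
      else par \<gamma> p)"

definition step :: "'v set \<Rightarrow> 'v \<Rightarrow> ('v \<Rightarrow> 'v list) \<Rightarrow> 'v cfg \<Rightarrow> 'v cfg \<Rightarrow> bool" where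
  "step V r N \<gamma> \<gamma>' \<longleftrightarrow> (\<exists>S. S \<noteq> {} \<and> (\<forall>p\<in>S. enabled V r N \<gamma> p) \<and>
     (\<forall>p\<in>S. dval \<gamma>' p = new_dval r N \<gamma> p \<and> par \<gamma>' p = new_par r N \<gamma> p) \<and>
     (\<forall>p. p \<notin> S \<longrightarrow> dval \<gamma>' p = dval \<gamma> p \<and> par \<gamma>' p = par \<gamma> p))"

definition d_step :: "'v set \<Rightarrow> 'v \<Rightarrow> ('v \<Rightarrow> 'v list) \<Rightarrow> 'v cfg \<Rightarrow> 'v cfg \<Rightarrow> bool" where
  "d_step V r N \<gamma> \<gamma>' \<longleftrightarrow> step V r N \<gamma> \<gamma>' \<and> dval \<gamma> r = dval \<gamma>' r \<and>
     (\<exists>p. dval \<gamma> p \<noteq> dval \<gamma>' p)"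

definition smooth :: "'v cfg \<Rightarrow> 'v \<times> 'v \<Rightarrow> bool" where
  "smooth \<gamma> e \<longleftrightarrow> \<bar>int (dval \<gamma> (fst e)) - int (dval \<gamma> (snd e))\<bar> \<le> 1"

definition smooth_dstep :: "('v \<Rightarrow> 'v list) \<Rightarrow> 'v cfg \<Rightarrow> 'v cfg \<Rightarrow> bool" where
  "smooth_dstep N \<gamma> \<gamma>' \<longleftrightarrow>
     (\<forall>p. dval \<gamma>' p \<noteq> dval \<gamma> p \<longrightarrow> (\<forall>q\<in>set (N p). smooth \<gamma> (p, q)))"

definition rank :: "'v cfg \<Rightarrow> 'v \<times> 'v \<Rightarrow> nat" where
  "rank \<gamma> e = min (dval \<gamma> (fst e)) (dval \<gamma> (snd e))"

end

theory Submission
  imports Defs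
begin

theorem lemma6:
  fixes V :: "'v set" and r :: 'v and N :: "'v \<Rightarrow> 'v list" and \<gamma> \<gamma>' :: "'v cfg"
  assumes "bfs_graph V r N"
    and "valid_cfg V N \<gamma>"
    and "d_step V r N \<gamma> \<gamma>'"
    and "\<not> smooth_dstep N \<gamma> \<gamma>'"
  defines "K \<equiv> {rank \<gamma> e | e. e \<in> Edges V N \<and> \<not> smooth \<gamma> e \<and>
                  (dval \<gamma>' (fst e) \<noteq> dval \<gamma> (fst e) \<or> dval \<gamma>' (snd e) \<noteq> dval \<gamma> (snd e))}"
  shows "K \<noteq> {} \<and>
         (\<forall>e\<in>Edges V N. rank \<gamma>' e \<le> Min K \<and> \<not> smooth \<gamma>' e \<longrightarrow>
           rank \<gamma> e = rank \<gamma>' e \<and> \<not> smooth \<gamma> e) \<and>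
         (\<forall>e\<in>Edges V N. rank \<gamma> e < Min K \<and> \<not> smooth \<gamma> e \<longrightarrow>
           rank \<gamma>' e = rank \<gamma> e \<and> \<not> smooth \<gamma>' e) \<and>
         (\<exists>e\<in>Edges V N. rank \<gamma> e = Min K \<and> \<not> smooth \<gamma> e \<and>
           (\<not> smooth \<gamma>' e \<longrightarrow> rank \<gamma>' e > rank \<gamma> e))"
proof -
  define d where "d = dval \<gamma>"
  define d' where "d' = dval \<gamma>'"
  define k where "k = Min K"
  have G: "finite V" "\<And>p. p \<in> V \<Longrightarrow> set (N p) \<subseteq> V"
    "\<And>p q. p \<in> V \<Longrightarrow> q \<in> V \<Longrightarrow> q \<in> set (N p) \<longleftrightarrow> p \<in> set (N q)"
    using assms(1) unfolding bfs_graph_def by auto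
  have Esym: "(q, p) \<in> Edges V N" if "(p, q) \<in> Edges V N" for p q
    using that G unfolding Edges_def by auto
  obtain S where S: "S \<noteq> {}" "\<forall>p\<in>S. enabled V r N \<gamma> p"
     "\<forall>p\<in>S. dval \<gamma>' p = new_dval r N \<gamma> p"
     "\<forall>p. p \<notin> S \<longrightarrow> dval \<gamma>' p = dval \<gamma> p"
    using assms(3) unfolding d_step_def step_def by blast
  have droot: "dval \<gamma> r = dval \<gamma>' r" using assms(3) unfolding d_step_def by blast
  have F1: "x \<in> V \<and> d' x = Dist N \<gamma> x" if "d' x \<noteq> d x" for x
  proof -
    have xS: "x \<in> S" using S(4) that unfolding d_def d'_def by auto
    have "x \<in> V" using S(2) xS unfolding enabled_def by auto
    moreover have "x \<noteq> r" using droot that unfolding d_def d'_def by auto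
    moreover have "d' x = new_dval r N \<gamma> x" using S(3) xS unfolding d'_def by auto
    ultimately show ?thesis using that unfolding new_dval_def d_def by (auto split: if_splits)
  qed
  have setfin: "{dval \<gamma> q + 1 | q. q \<in> set (N x)} = (\<lambda>q. d q + 1) ` set (N x)" for x
    unfolding d_def by auto
  have F2: "Dist N \<gamma> x \<le> d y + 1" if "y \<in> set (N x)" for x y
    unfolding Dist_def setfin using that by (intro Min_le) auto
  have F3: "\<exists>y\<in>set (N x). Dist N \<gamma> x = d y + 1" if "y0 \<in> set (N x)" for x y0
  proof -
    have "Dist N \<gamma> x \<in> (\<lambda>q. d q + 1) ` set (N x)"
      unfolding Dist_def setfin using that by (intro Min_in) auto
    then show ?thesis by auto
  qed
  have finE: "finite (Edges V N)"
  proof -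
    have "Edges V N \<subseteq> V \<times> V" using G unfolding Edges_def by auto
    then show ?thesis using G(1) finite_subset by blast
  qed
  have finK: "finite K"
  proof -
    have "K \<subseteq> rank \<gamma> ` Edges V N" unfolding K_def by auto
    then show ?thesis using finE finite_subset by blast
  qed
  have F4: "k \<le> min (d p) (d q)" if "(p, q) \<in> Edges V N" "\<not> smooth \<gamma> (p, q)"
    "d' p \<noteq> d p \<or> d' q \<noteq> d q" for p q
  proof -
    have "rank \<gamma> (p, q) \<in> K" unfolding K_def using that unfolding d_def d'_def by auto
    then show ?thesis unfolding k_def rank_def d_def using finK Min_le by fastforce
  qed
  have ns: "\<not> smooth \<gamma> (p, q) \<longleftrightarrow> d p + 2 \<le> d q \<or> d q + 2 \<le> d p" for p q
    unfolding smooth_def d_def by auto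
  have ns': "\<not> smooth \<gamma>' (p, q) \<longleftrightarrow> d' p + 2 \<le> d' q \<or> d' q + 2 \<le> d' p" for p q
    unfolding smooth_def d'_def by auto
  have A: "d' p = d p \<and> d' q = d q"
    if E: "(p, q) \<in> Edges V N" and lt: "d' p + 2 \<le> d' q" and le: "d' p \<le> k" for p q
  proof -
    have pV: "p \<in> V" and qN: "q \<in> set (N p)" using E unfolding Edges_def by auto
    have qV: "q \<in> V" using G(2) pV qN by auto
    have pN: "p \<in> set (N q)" using G(3) pV qV qN by auto
    have "d' p = d p"
    proof (rule ccontr)
      assume cp: "d' p \<noteq> d p"
      have Dp: "d' p = Dist N \<gamma> p" using F1 cp by auto
      obtain y where yN: "y \<in> set (N p)" and y: "Dist N \<gamma> p = d y + 1" using F3 qN by blast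
      have Ey: "(p, y) \<in> Edges V N" using pV yN unfolding Edges_def by auto
      have "\<not> d p \<ge> d y + 2"
      proof
        assume "d p \<ge> d y + 2"
        then have "k \<le> min (d p) (d y)" using F4[OF Ey] cp ns by auto
        then show False using Dp y le by auto
      qed
      moreover have "\<not> d p + 2 \<le> d y"
      proof
        assume "d p + 2 \<le> d y"
        then have "k \<le> min (d p) (d y)" using F4[OF Ey] cp ns by auto
        then show False using Dp y le by auto
      qed
      moreover have "d y \<le> d q" using F2[OF qN] y by auto
      moreover have "\<not> d q \<ge> d p + 2"
      proof
        assume "d q \<ge> d p + 2"
        then have "k \<le> min (d p) (d q)" using F4[OF E] cp ns by auto
        then show False using Dp y le cp \<open>\<not> d p \<ge> d y + 2\<close> by auto
      qed
      ultimately have "d q \<le> d y + 1" "d p \<le> d y" using cp Dp y by auto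
      then have cq: "d' q \<noteq> d q" using lt Dp y by auto
      then have "d' q = Dist N \<gamma> q" using F1 by auto
      then have "d' q \<le> d p + 1" using F2[OF pN] by auto
      then show False using lt Dp y \<open>d p \<le> d y\<close> by auto
    qed
    moreover have "d' q = d q"
    proof (rule ccontr)
      assume "d' q \<noteq> d q"
      then have "d' q = Dist N \<gamma> q" using F1 by auto
      then have "d' q \<le> d p + 1" using F2[OF pN] by auto
      then show False using lt \<open>d' p = d p\<close> by auto
    qed
    ultimately show ?thesis by auto
  qed
  have A2: "d' p = d p \<and> d' q = d q"
    if E: "(p, q) \<in> Edges V N" and nsm: "\<not> smooth \<gamma>' (p, q)" and le: "min (d' p) (d' q) \<le> k"
    for p q
  proof (cases "d' p + 2 \<le> d' q")
    case True then show ?thesis using A[OF E] le by auto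
  next
    case False
    then have "d' q + 2 \<le> d' p" using nsm ns' by auto
    then show ?thesis using A[OF Esym[OF E]] le by auto
  qed
  have Kne: "K \<noteq> {}"
  proof -
    obtain p q where "dval \<gamma>' p \<noteq> dval \<gamma> p" "q \<in> set (N p)" "\<not> smooth \<gamma> (p, q)"
      using assms(4) unfolding smooth_dstep_def by blast
    moreover then have "p \<in> V" using F1 unfolding d_def d'_def by auto
    ultimately have "rank \<gamma> (p, q) \<in> K" unfolding K_def Edges_def by auto
    then show ?thesis by auto
  qed
  have P1: "\<forall>e\<in>Edges V N. rank \<gamma>' e \<le> Min K \<and> \<not> smooth \<gamma>' e \<longrightarrow>
           rank \<gamma> e = rank \<gamma>' e \<and> \<not> smooth \<gamma> e"
  proof (intro ballI impI)
    fix e assume e: "e \<in> Edges V N" "rank \<gamma>' e \<le> Min K \<and> \<not> smooth \<gamma>' e"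
    obtain p q where pq: "e = (p, q)" by fastforce
    have "d' p = d p \<and> d' q = d q" using A2[of p q] e unfolding pq rank_def k_def d'_def by auto
    then show "rank \<gamma> e = rank \<gamma>' e \<and> \<not> smooth \<gamma> e" using e
      unfolding pq rank_def smooth_def d_def d'_def by auto
  qed
  have P2: "\<forall>e\<in>Edges V N. rank \<gamma> e < Min K \<and> \<not> smooth \<gamma> e \<longrightarrow>
           rank \<gamma>' e = rank \<gamma> e \<and> \<not> smooth \<gamma>' e"
  proof (intro ballI impI)
    fix e assume e: "e \<in> Edges V N" "rank \<gamma> e < Min K \<and> \<not> smooth \<gamma> e"
    obtain p q where pq: "e = (p, q)" by fastforce
    have "d' p = d p \<and> d' q = d q"
      using F4[of p q] e unfolding pq rank_def k_def d_def by fastforce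
    then show "rank \<gamma>' e = rank \<gamma> e \<and> \<not> smooth \<gamma>' e" using e
      unfolding pq rank_def smooth_def d_def d'_def by auto
  qed
  have P3: "\<exists>e\<in>Edges V N. rank \<gamma> e = Min K \<and> \<not> smooth \<gamma> e \<and>
           (\<not> smooth \<gamma>' e \<longrightarrow> rank \<gamma>' e > rank \<gamma> e)"
  proof -
    have "Min K \<in> K" using finK Kne by auto
    then obtain e where e: "e \<in> Edges V N" "\<not> smooth \<gamma> e" "rank \<gamma> e = Min K"
      "dval \<gamma>' (fst e) \<noteq> dval \<gamma> (fst e) \<or> dval \<gamma>' (snd e) \<noteq> dval \<gamma> (snd e)"
      unfolding K_def by auto
    obtain p q where pq: "e = (p, q)" by fastforce
    have "\<not> smooth \<gamma>' e \<longrightarrow> rank \<gamma>' e > rank \<gamma> e"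
    proof
      assume n: "\<not> smooth \<gamma>' e"
      show "rank \<gamma>' e > rank \<gamma> e"
      proof (rule ccontr)
        assume "\<not> rank \<gamma>' e > rank \<gamma> e"
        then have "d' p = d p \<and> d' q = d q" using A2[of p q] e n
          unfolding pq rank_def k_def d'_def by auto
        then show False using e(4) unfolding pq d_def d'_def by auto
      qed
    qed
    then show ?thesis using e by blast
  qed
  show ?thesis using Kne P1 P2 P3 by blast
qed

end
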